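(* Let $\mathcal H$ be a well-structured preconditioner set and $M\in\mathcal S^d_{++}$. Then the Frobenius-norm projection of $M$ onto $\mathcal H$, $\operatorname{proj}_{\mathcal H}(M)=\arg\min_{H\in\mathcal H}\|M-H\|_F^2$, equals $P_{\mathcal H}(M)^2$.
   Context: $\mathcal S^d_+$ (resp. $\mathcal S^d_{++}$) denotes the set of real symmetric positive semidefinite (resp. positive definite) $d\times d$ matrices; $\langle A,B\rangle=\operatorname{Tr}(A^\top B)$. A set $\mathcal H\subseteq\mathcal S_+^d$ is a well-structured preconditioner set if $\mathcal H=\mathcal S_+^d\cap\mathcal K$ for some set $\mathcal K$ of real $d\times d$ matrices that is closed under scalar multiplication, matrix addition and matrix multiplication and contains the identity $I_d$. For $M\in\mathcal S^d_{++}$, $P_{\mathcal H}(M):=\arg\min_{H\in\mathcal H\cap\mathcal S^d_{++}}\langle M,H^{-1}\rangle+\operatorname{Tr}(H)$ (the minimizer exists and is unique). *)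

theory Defs
  imports "HOL-Analysis.Analysis"
begin

definition psd :: "real^'d^'d \<Rightarrow> bool" where
  "psd A \<longleftrightarrow> transpose A = A \<and> (\<forall>x. 0 \<le> x \<bullet> (A *v x))"

definition pd :: "real^'d^'d \<Rightarrow> bool" where
  "pd A \<longleftrightarrow> transpose A = A \<and> (\<forall>x. x \<noteq> 0 \<longrightarrow> 0 < x \<bullet> (A *v x))"

definition frob_inner :: "real^'d^'d \<Rightarrow> real^'d^'d \<Rightarrow> real" where
  "frob_inner A B = trace (transpose A ** B)"

definition frob_norm_sq :: "real^'d^'d \<Rightarrow> real" where
  "frob_norm_sq A = frob_inner A A"

definition matrix_closed_set :: "(real^'d^'d) set \<Rightarrow> bool" where
  "matrix_closed_set K \<longleftrightarrow>
     (\<forall>c A. A \<in> K \<longrightarrow> c *\<^sub>R A \<in> K) \<and>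
     (\<forall>A B. A \<in> K \<longrightarrow> B \<in> K \<longrightarrow> A + B \<in> K) \<and>
     (\<forall>A B. A \<in> K \<longrightarrow> B \<in> K \<longrightarrow> A ** B \<in> K) \<and>
     mat 1 \<in> K"

definition well_structured :: "(real^'d^'d) set \<Rightarrow> bool" where
  "well_structured \<H> \<longleftrightarrow> (\<exists>K. matrix_closed_set K \<and> \<H> = {A. psd A} \<inter> K)"

definition precond_P :: "(real^'d^'d) set \<Rightarrow> real^'d^'d \<Rightarrow> real^'d^'d" where
  "precond_P \<H> M = (THE H. H \<in> \<H> \<and> pd H \<and>
      (\<forall>H'. H' \<in> \<H> \<and> pd H' \<longrightarrow>
         frob_inner M (matrix_inv H) + trace H \<le> frob_inner M (matrix_inv H') + trace H'))"

definition frob_proj :: "(real^'d^'d) set \<Rightarrow> real^'d^'d \<Rightarrow> real^'d^'d" where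
  "frob_proj \<H> M = (THE H. H \<in> \<H> \<and>
      (\<forall>H'. H' \<in> \<H> \<longrightarrow> frob_norm_sq (M - H) \<le> frob_norm_sq (M - H')))"

end

theory Submission
  imports Defs
begin

lemma frob_inner_eq: "frob_inner A B = A \<bullet> B"
  unfolding frob_inner_def trace_def matrix_matrix_mult_def transpose_def inner_vec_def
  by (simp add: sum_distrib_left) (rule sum.swap)

lemma frob_norm_sq_eq: "frob_norm_sq A = norm A ^ 2"
  by (simp add: frob_norm_sq_def frob_inner_eq power2_norm_eq_inner)

lemma inner_transpose: "x \<bullet> (transpose A *v y) = (A *v x) \<bullet> (y::real^'n)"
  by (metis dot_lmul_matrix inner_commute transpose_matrix_vector transpose_transpose)

lemma sym_inner: "transpose A = A \<Longrightarrow> x \<bullet> (A *v y) = y \<bullet> (A *v (x::real^'n))"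
  by (metis inner_commute inner_transpose)

lemma entry_inner: "axis i 1 \<bullet> (A *v axis j 1) = (A::real^'n^'n) $ i $ j"
  by (simp add: inner_axis' matrix_vector_mul_component inner_axis)

lemma transpose_diff: "transpose (A - B) = transpose A - transpose (B::real^'n^'m)"
  by (simp add: transpose_def vec_eq_iff)

lemma transpose_add: "transpose (A + B) = transpose A + transpose (B::real^'n^'m)"
  by (simp add: transpose_def vec_eq_iff)

lemma transpose_scaleR: "transpose (c *\<^sub>R B) = c *\<^sub>R transpose (B::real^'n^'m)"
  by (simp add: transpose_def vec_eq_iff)

lemma matrix_diff_rdistrib: "(A - B) ** C = A ** C - B ** (C::real^'n^'n)"
  by (simp add: matrix_eq matrix_vector_mul_assoc[symmetric] matrix_vector_mult_diff_rdistrib)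

lemma matrix_diff_ldistrib: "C ** (A - B) = C ** A - C ** (B::real^'n^'n)"
  by (simp add: matrix_eq matrix_vector_mul_assoc[symmetric] matrix_vector_mult_diff_rdistrib
      matrix_vector_mult_diff_distrib)

lemma matrix_add_rdistrib': "(A + B) ** C = A ** C + B ** (C::real^'n^'n)"
  by (simp add: matrix_eq matrix_vector_mul_assoc[symmetric] matrix_vector_mult_add_rdistrib)

lemma quad_le0:
  fixes c e \<delta> :: real
  assumes "\<delta> > 0" "\<And>t. 0 < t \<Longrightarrow> t < \<delta> \<Longrightarrow> 2*t*c \<le> t^2*e"
  shows "c \<le> 0"
proof (rule ccontr)
  assume "\<not> c \<le> 0"
  hence c: "c > 0" by simp
  define t where "t = min (\<delta>/2) (c/(\<bar>e\<bar>+1))"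
  have t0: "t > 0" using c assms(1) by (simp add: t_def)
  have "t < \<delta>" using assms(1) by (simp add: t_def)
  hence "2*t*c \<le> t^2*e" using assms(2) t0 by simp
  hence "2*c \<le> t*e" using t0 by (simp add: power2_eq_square mult.assoc)
  also have "\<dots> \<le> t*\<bar>e\<bar>" using t0 by (simp add: mult_left_mono)
  also have "\<dots> \<le> (c/(\<bar>e\<bar>+1))*\<bar>e\<bar>" by (rule mult_right_mono) (auto simp: t_def)
  also have "\<dots> < c" using c by (simp add: field_simps)
  finally show False using c by simp
qed

definition onb :: "(real^'n) set \<Rightarrow> bool" where
  "onb B \<longleftrightarrow> finite B \<and> card B = CARD('n) \<and> (\<forall>b\<in>B. b \<bullet> b = 1) \<and>
     (\<forall>b\<in>B. \<forall>c\<in>B. b \<noteq> c \<longrightarrow> b \<bullet> c = 0)"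

lemma onb_coef:
  assumes "onb B" "c \<in> B"
  shows "c \<bullet> (\<Sum>b\<in>B. f b *\<^sub>R b) = f c"
proof -
  have "c \<bullet> (\<Sum>b\<in>B. f b *\<^sub>R b) = (\<Sum>b\<in>B. f b * (c \<bullet> b))"
    by (simp add: inner_sum_right)
  also have "\<dots> = (\<Sum>b\<in>B. if b = c then f b else 0)"
    using assms unfolding onb_def by (intro sum.cong) (auto simp: inner_commute)
  also have "\<dots> = f c" using assms unfolding onb_def by simp
  finally show ?thesis .
qed

lemma onb_expand:
  fixes B :: "(real^'n) set"
  assumes B: "onb B"
  shows "x = (\<Sum>b\<in>B. (b \<bullet> x) *\<^sub>R b)"
proof (rule ccontr)
  define y where "y = x - (\<Sum>b\<in>B. (b \<bullet> x) *\<^sub>R b)"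
  assume "x \<noteq> (\<Sum>b\<in>B. (b \<bullet> x) *\<^sub>R b)"
  hence y0: "y \<noteq> 0" by (simp add: y_def)
  have cy: "c \<bullet> y = 0" if "c \<in> B" for c
    using onb_coef[OF B that, of "\<lambda>b. b \<bullet> x"] by (simp add: y_def inner_diff_right)
  have yB: "y \<notin> B" using cy y0 by (metis inner_eq_zero_iff)
  have fin: "finite B" and cardB: "card B = CARD('n)" using B by (auto simp: onb_def)
  have "pairwise orthogonal (insert y B)"
    using B cy unfolding pairwise_def orthogonal_def onb_def
    by (auto simp: inner_commute)
  moreover have "0 \<notin> insert y B" using y0 B by (auto simp: onb_def)
  ultimately have "independent (insert y B)" by (rule pairwise_orthogonal_independent)
  hence "card (insert y B) \<le> DIM(real^'n)" using independent_bound by blast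
  thus False using fin yB cardB by simp
qed

lemma onb_lin:
  assumes "onb B"
  shows "A *v x = (\<Sum>b\<in>B. (b \<bullet> x) *\<^sub>R (A *v b))"
proof -
  have "A *v x = A *v (\<Sum>b\<in>B. (b \<bullet> x) *\<^sub>R b)" using onb_expand[OF assms] by metis
  also have "\<dots> = (\<Sum>b\<in>B. (b \<bullet> x) *\<^sub>R (A *v b))"
    by (simp add: linear_sum[OF matrix_vector_mul_linear] o_def matrix_vector_mult_scaleR)
  finally show ?thesis .
qed

lemma onb_eq:
  assumes "onb B" "\<And>b. b \<in> B \<Longrightarrow> A *v b = C *v b"
  shows "A = C"
  unfolding matrix_eq using onb_lin[OF assms(1)] assms(2) by (metis (no_types, lifting) sum.cong)

lemma onb_bil:
  assumes "onb B" "\<And>b. b \<in> B \<Longrightarrow> T *v b = \<mu> b *\<^sub>R b"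
  shows "x \<bullet> (T *v y) = (\<Sum>b\<in>B. \<mu> b * ((b \<bullet> x) * (b \<bullet> y)))"
proof -
  have "x \<bullet> (T *v y) = x \<bullet> (\<Sum>b\<in>B. (b \<bullet> y) *\<^sub>R (\<mu> b *\<^sub>R b))"
    using onb_lin[OF assms(1), of T y] assms(2) by (simp cong: sum.cong)
  also have "\<dots> = (\<Sum>b\<in>B. \<mu> b * ((b \<bullet> x) * (b \<bullet> y)))"
    by (simp add: inner_sum_right inner_commute mult_ac)
  finally show ?thesis .
qed

lemma onb_norm: "onb B \<Longrightarrow> x \<bullet> x = (\<Sum>b\<in>B. (b \<bullet> x)^2)"
  using onb_bil[of B "mat 1" "\<lambda>_. 1" x x] by (simp add: power2_eq_square)

lemma onb_sym:
  assumes "onb B" "\<And>b. b \<in> B \<Longrightarrow> T *v b = \<mu> b *\<^sub>R b"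
  shows "transpose T = T"
proof -
  have "T $ i $ j = T $ j $ i" for i j
    using onb_bil[OF assms, of "axis i 1" "axis j 1"] onb_bil[OF assms, of "axis j 1" "axis i 1"]
    by (simp add: entry_inner mult_ac)
  thus ?thesis by (simp add: transpose_def vec_eq_iff)
qed

lemma onb_psd:
  assumes "onb B" "\<And>b. b \<in> B \<Longrightarrow> T *v b = \<mu> b *\<^sub>R b" "\<And>b. b \<in> B \<Longrightarrow> \<mu> b \<ge> 0"
  shows "psd T"
  unfolding psd_def
proof (intro conjI allI)
  show "transpose T = T" using onb_sym assms by blast
  fix x show "0 \<le> x \<bullet> (T *v x)"
    using onb_bil[OF assms(1,2), of x x] assms(3) by (auto intro!: sum_nonneg)
qed

lemma onb_ex_nonzero:
  assumes "onb B" "x \<noteq> 0"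
  shows "\<exists>b\<in>B. b \<bullet> x \<noteq> 0"
  using onb_expand[OF assms(1), of x] assms(2) by (metis (no_types, lifting) scale_zero_left sum.neutral)

lemma onb_pd:
  assumes "onb B" "\<And>b. b \<in> B \<Longrightarrow> T *v b = \<mu> b *\<^sub>R b" "\<And>b. b \<in> B \<Longrightarrow> \<mu> b > 0"
  shows "pd T"
  unfolding pd_def
proof (intro conjI allI impI)
  show "transpose T = T" using onb_sym assms by blast
  fix x :: "real^'a" assume "x \<noteq> 0"
  then obtain c where c: "c \<in> B" "c \<bullet> x \<noteq> 0" using onb_ex_nonzero assms(1) by blast
  have fin: "finite B" using assms(1) by (simp add: onb_def)
  have "0 < \<mu> c * ((c \<bullet> x) * (c \<bullet> x))"
    by (metis c(1) c(2) assms(3) mult_pos_pos not_real_square_gt_zero)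
  also have "\<dots> \<le> (\<Sum>b\<in>B. \<mu> b * ((b \<bullet> x) * (b \<bullet> x)))"
  proof (rule member_le_sum[OF c(1) _ fin])
    fix b assume "b \<in> B - {c}"
    thus "0 \<le> \<mu> b * ((b \<bullet> x) * (b \<bullet> x))"
      by (metis DiffD1 assms(3) less_imp_le mult_nonneg_nonneg zero_le_square)
  qed
  finally show "0 < x \<bullet> (T *v x)" using onb_bil[OF assms(1,2), of x x] by simp
qed

lemma onb_trace:
  assumes B: "onb B"
  shows "trace A = (\<Sum>b\<in>B. b \<bullet> (A *v b))"
proof -
  have "trace A = (\<Sum>i\<in>UNIV. axis i 1 \<bullet> (A *v axis i 1))"
    by (simp add: trace_def entry_inner)
  also have "\<dots> = (\<Sum>i\<in>UNIV. (\<Sum>b\<in>B. (b $ i) * ((A *v b) $ i)))"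
  proof (intro sum.cong refl)
    fix i :: 'a
    have "axis i 1 \<bullet> (A *v axis i 1) = axis i 1 \<bullet> (\<Sum>b\<in>B. (b \<bullet> axis i 1) *\<^sub>R (A *v b))"
      using onb_lin[OF B, of A "axis i 1"] by simp
    also have "\<dots> = (\<Sum>b\<in>B. (b $ i) * ((A *v b) $ i))"
      by (simp add: inner_sum_right inner_axis' inner_axis inner_commute)
    finally show "axis i 1 \<bullet> (A *v axis i 1) = (\<Sum>b\<in>B. (b $ i) * ((A *v b) $ i))" .
  qed
  also have "\<dots> = (\<Sum>b\<in>B. (\<Sum>i\<in>UNIV. (b $ i) * ((A *v b) $ i)))"
    by (rule sum.swap)
  also have "\<dots> = (\<Sum>b\<in>B. b \<bullet> (A *v b))"
    by (simp add: inner_vec_def)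
  finally show ?thesis .
qed

lemma sym_eig_subspace:
  fixes A :: "real^'n^'n"
  assumes sym: "transpose A = A" and S: "subspace S" and inv: "\<forall>x\<in>S. A *v x \<in> S"
    and x0: "x0 \<in> S" "x0 \<noteq> 0"
  shows "\<exists>v\<in>S. v \<bullet> v = 1 \<and> A *v v = (v \<bullet> (A *v v)) *\<^sub>R v"
proof -
  let ?T = "S \<inter> sphere 0 1"
  let ?q = "\<lambda>x. x \<bullet> (A *v x)"
  have cT: "compact ?T" using closed_subspace[OF S] compact_sphere by (rule closed_Int_compact)
  have "(1/norm x0) *\<^sub>R x0 \<in> ?T" using x0 S by (simp add: subspace_scale)
  hence ne: "?T \<noteq> {}" by blast
  have lc: "continuous_on UNIV ((*v) A)"
    by (simp add: linear_continuous_on matrix_vector_mul_bounded_linear)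
  have cont: "continuous_on ?T ?q"
    by (intro continuous_intros continuous_on_subset[OF lc]) auto
  obtain v where v: "v \<in> ?T" "\<And>y. y \<in> ?T \<Longrightarrow> ?q y \<le> ?q v"
    using continuous_attains_sup[OF cT ne cont] by blast
  define c where "c = ?q v"
  have vS: "v \<in> S" using v by blast
  have vv: "v \<bullet> v = 1" using v(1) by (simp add: dot_square_norm)
  have bound: "?q y \<le> c * (y \<bullet> y)" if yS: "y \<in> S" for y
  proof (cases "y = 0")
    case True thus ?thesis by simp
  next
    case False
    define u where "u = (1/norm y) *\<^sub>R y"
    have "u \<in> ?T" using yS False S by (simp add: u_def subspace_scale)
    hence "?q u \<le> c" using v(2) c_def by blast
    moreover have "?q u = ?q y / (norm y)^2"
      by (simp add: u_def matrix_vector_mult_scaleR power2_eq_square)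
    ultimately have "?q y / (norm y)^2 \<le> c" by simp
    hence "?q y \<le> c * (norm y)^2" using False by (simp add: divide_le_eq)
    thus ?thesis by (simp add: power2_norm_eq_inner)
  qed
  have orth: "w \<bullet> (A *v v) = 0" if wS: "w \<in> S" and wv: "w \<bullet> v = 0" for w
  proof -
    define a where "a = w \<bullet> (A *v v)"
    define e where "e = c * (w \<bullet> w) - ?q w"
    have key: "2*t*a \<le> t^2*e" for t
    proof -
      have "v + t *\<^sub>R w \<in> S" using vS wS S by (simp add: subspace_add subspace_scale)
      hence "?q (v + t *\<^sub>R w) \<le> c * ((v + t *\<^sub>R w) \<bullet> (v + t *\<^sub>R w))" by (rule bound)
      moreover have "?q (v + t *\<^sub>R w) = c + 2*t*a + t^2 * ?q w"
        using sym_inner[OF sym, of v w]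
        by (simp add: c_def a_def matrix_vector_right_distrib matrix_vector_mult_scaleR
            inner_add_left inner_add_right power2_eq_square algebra_simps)
      moreover have "(v + t *\<^sub>R w) \<bullet> (v + t *\<^sub>R w) = 1 + t^2 * (w \<bullet> w)"
        using vv wv by (simp add: inner_add_left inner_add_right inner_commute power2_eq_square)
      ultimately have "c + 2*t*a + t^2 * ?q w \<le> c * (1 + t^2 * (w \<bullet> w))" by metis
      thus ?thesis by (simp add: e_def algebra_simps)
    qed
    have "a \<le> 0" by (rule quad_le0[of 1]) (use key in auto)
    moreover have "-a \<le> 0"
    proof (rule quad_le0[of 1])
      fix t :: real
      show "2*t*(-a) \<le> t^2*e" using key[of "-t"] by simp
    qed simp
    ultimately show ?thesis by (simp add: a_def)
  qed
  define w where "w = A *v v - c *\<^sub>R v"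
  have wS: "w \<in> S" using inv vS S by (simp add: w_def subspace_diff subspace_scale)
  have wv: "w \<bullet> v = 0" unfolding w_def c_def using vv
    by (simp add: inner_diff_left inner_commute[of "A *v v" v])
  have "w \<bullet> w = w \<bullet> (A *v v) - c * (w \<bullet> v)" by (simp add: w_def inner_diff_right)
  also have "\<dots> = 0" using orth[OF wS wv] wv by simp
  finally have "w = 0" by simp
  hence "A *v v = c *\<^sub>R v" by (simp add: w_def)
  thus ?thesis using vS vv c_def by blast
qed

lemma spectral_aux:
  fixes A :: "real^'n^'n"
  assumes sym: "transpose A = A"
  shows "n \<le> CARD('n) \<Longrightarrow> \<exists>B. finite B \<and> card B = n \<and>
     (\<forall>b\<in>B. b \<bullet> b = 1 \<and> A *v b = (b \<bullet> (A *v b)) *\<^sub>R b) \<and>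
     (\<forall>b\<in>B. \<forall>c\<in>B. b \<noteq> c \<longrightarrow> b \<bullet> c = 0)"
proof (induction n)
  case 0 show ?case by (rule exI[of _ "{}"]) simp
next
  case (Suc n)
  then obtain B :: "(real^'n) set" where B: "finite B" "card B = n"
     "\<forall>b\<in>B. b \<bullet> b = 1 \<and> A *v b = (b \<bullet> (A *v b)) *\<^sub>R b"
     "\<forall>b\<in>B. \<forall>c\<in>B. b \<noteq> c \<longrightarrow> b \<bullet> c = 0" using Suc_leD by blast
  define S where "S = {x. \<forall>b\<in>B. b \<bullet> x = 0}"
  have S: "subspace S" by (auto simp: subspace_def S_def inner_add_right)
  have inv: "\<forall>x\<in>S. A *v x \<in> S"
  proof (intro ballI)
    fix x assume "x \<in> S"
    { fix b assume b: "b \<in> B"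
      have "b \<bullet> (A *v x) = x \<bullet> (A *v b)" by (rule sym_inner[OF sym])
      also have "\<dots> = (b \<bullet> (A *v b)) * (x \<bullet> b)" using B(3) b by (metis inner_scaleR_right)
      also have "\<dots> = 0" using \<open>x \<in> S\<close> b by (simp add: S_def inner_commute)
      finally have "b \<bullet> (A *v x) = 0" . }
    thus "A *v x \<in> S" by (simp add: S_def)
  qed
  have "dim B \<le> card B" using B(1) by (rule dim_le_card')
  hence "dim B < DIM(real^'n)" using B(2) Suc.prems by simp
  then obtain x where x: "x \<noteq> 0" "\<And>y. y \<in> span B \<Longrightarrow> orthogonal x y"
    using orthogonal_to_subspace_exists[OF \<open>dim B < _\<close>] by blast
  have xS: "x \<in> S" using x(2) span_base unfolding S_def orthogonal_def by (fastforce simp: inner_commute)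
  obtain v where v: "v \<in> S" "v \<bullet> v = 1" "A *v v = (v \<bullet> (A *v v)) *\<^sub>R v"
    using sym_eig_subspace[OF sym S inv xS x(1)] by blast
  have vB: "v \<notin> B" using v by (auto simp: S_def)
  show ?case
  proof (rule exI[of _ "insert v B"], intro conjI)
    show "finite (insert v B)" using B by simp
    show "card (insert v B) = Suc n" using B vB by simp
    show "\<forall>b\<in>insert v B. b \<bullet> b = 1 \<and> A *v b = (b \<bullet> (A *v b)) *\<^sub>R b" using B v by auto
    show "\<forall>b\<in>insert v B. \<forall>c\<in>insert v B. b \<noteq> c \<longrightarrow> b \<bullet> c = 0"
      using B v by (auto simp: S_def inner_commute)
  qed
qed

lemma spectral:
  fixes A :: "real^'n^'n"
  assumes "transpose A = A"
  shows "\<exists>B. onb B \<and> (\<forall>b\<in>B. A *v b = (b \<bullet> (A *v b)) *\<^sub>R b)"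
  using spectral_aux[OF assms, of "CARD('n)"] unfolding onb_def by auto

lemma scaleR_mat1_vec: "((k::real) *\<^sub>R mat 1) *v v = k *\<^sub>R (v::real^'n)"
  by (metis matrix_vector_mul_lid scaleR_matrix_vector_assoc)

lemma fcalc:
  fixes S :: "real^'n^'n"
  assumes K: "matrix_closed_set K" and SK: "S \<in> K" and L: "finite L"
  shows "\<exists>T\<in>K. \<forall>v l. S *v v = l *\<^sub>R v \<longrightarrow> l \<in> L \<longrightarrow> T *v v = g l *\<^sub>R v"
  using L
proof (induction L arbitrary: g rule: finite_induct)
  case empty show ?case using K by (auto simp: matrix_closed_set_def)
next
  case (insert a L)
  obtain T1 where T1: "T1 \<in> K"
    "\<forall>v l. S *v v = l *\<^sub>R v \<longrightarrow> l \<in> L \<longrightarrow> T1 *v v = ((g l - g a)/(l - a)) *\<^sub>R v"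
    using insert.IH[of "\<lambda>l. (g l - g a)/(l - a)"] by blast
  define T where "T = T1 ** (S + (-a) *\<^sub>R mat 1) + g a *\<^sub>R mat 1"
  have TK: "T \<in> K" using K SK T1(1) unfolding T_def matrix_closed_set_def by blast
  have act: "T *v v = g l *\<^sub>R v" if Sv: "S *v v = l *\<^sub>R v" and l: "l \<in> insert a L" for v l
  proof -
    have "T *v v = T1 *v ((S + (-a) *\<^sub>R mat 1) *v v) + g a *\<^sub>R v"
      by (simp add: T_def matrix_vector_mult_add_rdistrib matrix_vector_mul_assoc[symmetric] scaleR_mat1_vec)
    also have "(S + (-a) *\<^sub>R mat 1) *v v = (l - a) *\<^sub>R v"
      using Sv by (simp add: matrix_vector_mult_add_rdistrib scaleR_mat1_vec algebra_simps)
    finally have eq: "T *v v = (l - a) *\<^sub>R (T1 *v v) + g a *\<^sub>R v"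
      by (simp add: matrix_vector_mult_scaleR)
    show ?thesis
    proof (cases "l = a")
      case True thus ?thesis using eq by simp
    next
      case False
      hence "l \<in> L" using l by simp
      hence "T1 *v v = ((g l - g a)/(l - a)) *\<^sub>R v" using T1(2) Sv by blast
      thus ?thesis using eq False by (simp add: scaleR_add_left[symmetric])
    qed
  qed
  show ?case using TK act by blast
qed

lemma fcalc_onb:
  assumes K: "matrix_closed_set K" and SK: "S \<in> K" and B: "onb B"
    and ev: "\<And>b. b \<in> B \<Longrightarrow> S *v b = \<mu> b *\<^sub>R b"
  shows "\<exists>T\<in>K. \<forall>b\<in>B. T *v b = g (\<mu> b) *\<^sub>R b"
proof -
  have "finite (\<mu> ` B)" using B by (simp add: onb_def)
  from fcalc[OF K SK this, of g] obtain T where "T \<in> K"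
    "\<forall>v l. S *v v = l *\<^sub>R v \<longrightarrow> l \<in> \<mu> ` B \<longrightarrow> T *v v = g l *\<^sub>R v" by blast
  thus ?thesis using ev by blast
qed

lemma trace_pos:
  fixes M N :: "real^'n^'n"
  assumes M: "pd M" and N: "psd N"
  shows "0 \<le> trace (M ** N)" "N \<noteq> 0 \<Longrightarrow> 0 < trace (M ** N)"
proof -
  have Nsym: "transpose N = N" using N by (simp add: psd_def)
  obtain B where B: "onb B" and ev: "\<forall>b\<in>B. N *v b = (b \<bullet> (N *v b)) *\<^sub>R b"
    using spectral[OF Nsym] by blast
  define \<mu> where "\<mu> b = b \<bullet> (N *v b)" for b
  have fin: "finite B" using B by (simp add: onb_def)
  have b0: "b \<noteq> 0" if "b \<in> B" for b using B that by (auto simp: onb_def)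
  have tr: "trace (M ** N) = (\<Sum>b\<in>B. \<mu> b * (b \<bullet> (M *v b)))"
  proof -
    have "trace (M ** N) = (\<Sum>b\<in>B. b \<bullet> ((M ** N) *v b))" by (rule onb_trace[OF B])
    also have "\<dots> = (\<Sum>b\<in>B. \<mu> b * (b \<bullet> (M *v b)))"
    proof (rule sum.cong[OF refl])
      fix b assume "b \<in> B"
      hence "N *v b = \<mu> b *\<^sub>R b" using ev by (simp add: \<mu>_def)
      thus "b \<bullet> ((M ** N) *v b) = \<mu> b * (b \<bullet> (M *v b))"
        by (simp add: matrix_vector_mul_assoc[symmetric] matrix_vector_mult_scaleR)
    qed
    finally show ?thesis .
  qed
  have terms: "0 \<le> \<mu> b * (b \<bullet> (M *v b))" if "b \<in> B" for b
  proof -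
    have "0 \<le> \<mu> b" using N by (simp add: \<mu>_def psd_def)
    moreover have "0 < b \<bullet> (M *v b)" using M b0[OF that] by (simp add: pd_def)
    ultimately show ?thesis by simp
  qed
  show "0 \<le> trace (M ** N)" using terms by (simp add: tr sum_nonneg)
  assume "N \<noteq> 0"
  have "\<exists>b\<in>B. \<mu> b \<noteq> 0"
  proof (rule ccontr)
    assume "\<not> ?thesis"
    hence "\<forall>b\<in>B. N *v b = 0 *v b" using ev by (simp add: \<mu>_def)
    hence "N = 0" using onb_eq[OF B] by blast
    thus False using \<open>N \<noteq> 0\<close> by simp
  qed
  then obtain c where c: "c \<in> B" "\<mu> c \<noteq> 0" by blast
  have "\<mu> c \<ge> 0" using N by (simp add: \<mu>_def psd_def)
  hence "0 < \<mu> c * (c \<bullet> (M *v c))" using c M b0[OF c(1)] by (simp add: pd_def)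
  also have "\<dots> \<le> (\<Sum>b\<in>B. \<mu> b * (b \<bullet> (M *v b)))"
    using terms c fin by (intro member_le_sum) auto
  finally show "0 < trace (M ** N)" by (simp add: tr)
qed

lemma psd_add_scale:
  assumes "psd A" "psd B" "t \<ge> 0"
  shows "psd (A + t *\<^sub>R B)"
  using assms unfolding psd_def
  by (auto simp: transpose_add transpose_scaleR matrix_vector_mult_add_rdistrib
      scaleR_matrix_vector_assoc[symmetric] inner_add_right)

lemma pd_psd: "pd A \<Longrightarrow> psd A"
  unfolding pd_def psd_def by (metis inner_zero_left less_eq_real_def matrix_vector_mult_0_right)

lemma real_inner_eq: "(a::real) \<bullet> b = a * b"
  by (simp add: inner_real_def)

lemma quad_form_inner:
  fixes x :: "real^'n" and A :: "real^'n^'n"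
  shows "x \<bullet> (A *v x) = A \<bullet> (\<chi> i j. x $ i * x $ j)"
  unfolding inner_vec_def matrix_vector_mult_def by (simp add: real_inner_eq sum_distrib_left mult_ac)

lemma closed_psd: "closed {A::real^'n^'n. psd A}"
proof -
  have eq: "{A::real^'n^'n. psd A} =
     (\<Inter>i. \<Inter>j. {A. A $ i $ j = A $ j $ i}) \<inter> (\<Inter>x. {A. 0 \<le> A \<bullet> (\<chi> i j. x $ i * x $ j)})"
    by (auto simp: psd_def quad_form_inner[symmetric] transpose_def vec_eq_iff)
  have c1: "closed {A::real^'n^'n. A $ i $ j = A $ j $ i}" for i j
    by (intro closed_Collect_eq continuous_on_component continuous_on_id)
  have c2: "closed {A::real^'n^'n. 0 \<le> A \<bullet> (\<chi> i j. x $ i * x $ j)}" for x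
    by (intro closed_Collect_le continuous_intros)
  show ?thesis unfolding eq using c1 c2 by (intro closed_Int closed_INT) auto
qed

theorem lemmaA4:
  fixes \<H> :: "(real^'d^'d) set" and M :: "real^'d^'d"
  assumes "well_structured \<H>"
    and "pd M"
  shows "frob_proj \<H> M = precond_P \<H> M ** precond_P \<H> M"
proof -
  obtain K where K: "matrix_closed_set K" and Hdef: "\<H> = {A. psd A} \<inter> K"
    using assms(1) well_structured_def by blast
  have Ksc: "c *\<^sub>R A \<in> K" if "A \<in> K" for c A using K that by (simp add: matrix_closed_set_def)
  have Kadd: "A + B \<in> K" if "A \<in> K" "B \<in> K" for A B using K that by (simp add: matrix_closed_set_def)
  have Kmul: "A ** B \<in> K" if "A \<in> K" "B \<in> K" for A B using K that by (simp add: matrix_closed_set_def)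
  have K1: "mat 1 \<in> K" using K by (simp add: matrix_closed_set_def)
  have Kdiff: "A - B \<in> K" if "A \<in> K" "B \<in> K" for A B
    using Kadd[OF that(1) Ksc[OF that(2), of "-1"]] by simp
  have Msym: "transpose M = M" using assms(2) by (simp add: pd_def)
  have subK: "subspace K" unfolding subspace_def using Ksc[OF K1, of 0] Kadd Ksc by auto
  have clH: "closed \<H>" unfolding Hdef using closed_psd closed_subspace[OF subK] by (rule closed_Int)
  have psd1: "psd (mat 1 :: real^'d^'d)" by (simp add: psd_def)
  hence neH: "\<H> \<noteq> {}" using K1 Hdef by blast
  obtain Q where Q: "Q \<in> \<H>" and Qmin: "\<And>y. y \<in> \<H> \<Longrightarrow> dist M Q \<le> dist M y"
    using distance_attains_inf[OF clH neH, of M] by blast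
  have QK: "Q \<in> K" and Qpsd: "psd Q" using Q Hdef by auto
  have Qsym: "transpose Q = Q" using Qpsd by (simp add: psd_def)
  have var: "(M - Q) \<bullet> E \<le> 0" if d: "\<delta> > 0" and hE: "\<And>t. 0 < t \<Longrightarrow> t < \<delta> \<Longrightarrow> Q + t *\<^sub>R E \<in> \<H>"
    for E \<delta>
  proof (rule quad_le0[OF d])
    fix t :: real assume t: "0 < t" "t < \<delta>"
    define R where "R = M - Q"
    have "dist M Q \<le> dist M (Q + t *\<^sub>R E)" using Qmin hE[OF t] by blast
    hence "norm R \<le> norm (R - t *\<^sub>R E)" by (simp add: dist_norm R_def algebra_simps)
    hence "(norm R)^2 \<le> (norm (R - t *\<^sub>R E))^2" by (simp add: power_mono)
    hence "R \<bullet> R \<le> (R - t *\<^sub>R E) \<bullet> (R - t *\<^sub>R E)" by (simp add: power2_norm_eq_inner)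
    also have "\<dots> = R \<bullet> R - 2*t*(R \<bullet> E) + t^2 * (E \<bullet> E)"
      by (simp add: inner_diff_left inner_diff_right inner_commute[of E R] power2_eq_square algebra_simps)
    finally show "2*t*((M - Q) \<bullet> E) \<le> t^2 * (E \<bullet> E)" by (simp add: R_def)
  qed
  obtain B where B: "onb B" and ev0: "\<forall>b\<in>B. Q *v b = (b \<bullet> (Q *v b)) *\<^sub>R b"
    using spectral[OF Qsym] by blast
  define \<mu> where "\<mu> b = b \<bullet> (Q *v b)" for b
  have ev: "Q *v b = \<mu> b *\<^sub>R b" if "b \<in> B" for b using ev0 that by (simp add: \<mu>_def)
  have finB: "finite B" using B by (simp add: onb_def)
  have b0: "b \<noteq> 0" if "b \<in> B" for b using B that by (auto simp: onb_def)
  have mu0: "\<mu> b \<ge> 0" for b using Qpsd by (simp add: psd_def \<mu>_def)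
  have mupos: "\<mu> b > 0" if bB: "b \<in> B" for b
  proof (rule ccontr)
    assume "\<not> \<mu> b > 0"
    hence mb: "\<mu> b = 0" using mu0[of b] by simp
    define g :: "real \<Rightarrow> real" where "g l = (if l = 0 then 1 else 0)" for l
    obtain E where EK: "E \<in> K" and Eev: "\<forall>c\<in>B. E *v c = g (\<mu> c) *\<^sub>R c"
      using fcalc_onb[OF K QK B ev, of g] by blast
    have Epsd: "psd E" using onb_psd[OF B, of E "\<lambda>c. g (\<mu> c)"] Eev by (simp add: g_def)
    have "E *v b = b" using Eev bB mb by (simp add: g_def)
    hence E0: "E \<noteq> 0" using b0[OF bB] by auto
    have QE: "Q ** E = 0"
    proof (rule onb_eq[OF B])
      fix c assume c: "c \<in> B"
      show "(Q ** E) *v c = 0 *v c"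
        using Eev c ev[OF c]
        by (simp add: matrix_vector_mul_assoc[symmetric] matrix_vector_mult_scaleR g_def)
    qed
    have "(M - Q) \<bullet> E \<le> 0"
    proof (rule var[of 1])
      fix t :: real assume "0 < t" "t < 1"
      thus "Q + t *\<^sub>R E \<in> \<H>" using psd_add_scale[OF Qpsd Epsd] Kadd[OF QK Ksc[OF EK]] Hdef by auto
    qed simp
    moreover have "(M - Q) \<bullet> E = trace (M ** E)"
      using QE by (simp add: frob_inner_eq[symmetric] frob_inner_def transpose_diff Msym Qsym
          matrix_diff_rdistrib trace_sub trace_def)
    moreover have "0 < trace (M ** E)" using trace_pos(2)[OF assms(2) Epsd E0] .
    ultimately show False by simp
  qed
  have Qpd: "pd Q" using onb_pd[OF B ev mupos] .
  have Bne: "B \<noteq> {}" using B by (auto simp: onb_def)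
  define m where "m = Min (\<mu> ` B)"
  have mpos: "m > 0" using finB Bne mupos by (simp add: m_def)
  have mle: "m \<le> \<mu> b" if "b \<in> B" for b using finB that by (simp add: m_def)
  have unif: "m * (x \<bullet> x) \<le> x \<bullet> (Q *v x)" for x
  proof -
    have "m * (x \<bullet> x) = (\<Sum>b\<in>B. m * ((b \<bullet> x) * (b \<bullet> x)))"
      by (simp add: onb_norm[OF B] sum_distrib_left power2_eq_square)
    also have "\<dots> \<le> (\<Sum>b\<in>B. \<mu> b * ((b \<bullet> x) * (b \<bullet> x)))"
      by (intro sum_mono mult_right_mono mle) auto
    also have "\<dots> = x \<bullet> (Q *v x)" using onb_bil[OF B ev] by simp
    finally show ?thesis .
  qed
  have orth: "(M - Q) \<bullet> D = 0" if DK: "D \<in> K" and Dsym: "transpose D = D" for D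
  proof -
    obtain C where C: "C > 0" "\<And>x. norm (D *v x) \<le> norm x * C"
      using bounded_linear.pos_bounded[OF matrix_vector_mul_bounded_linear[of D]] by blast
    have qb: "\<bar>x \<bullet> (D *v x)\<bar> \<le> C * (x \<bullet> x)" for x
    proof -
      have "\<bar>x \<bullet> (D *v x)\<bar> \<le> norm x * norm (D *v x)" by (rule Cauchy_Schwarz_ineq2)
      also have "\<dots> \<le> norm x * (norm x * C)" by (intro mult_left_mono C(2)) auto
      also have "\<dots> = C * (x \<bullet> x)" by (simp add: dot_square_norm power2_eq_square)
      finally show ?thesis .
    qed
    have inH: "Q + t *\<^sub>R D \<in> \<H>" if t: "\<bar>t\<bar> < m / C" for t
    proof -
      have "psd (Q + t *\<^sub>R D)" unfolding psd_def
      proof (intro conjI allI)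
        show "transpose (Q + t *\<^sub>R D) = Q + t *\<^sub>R D" by (simp add: transpose_add transpose_scaleR Qsym Dsym)
        fix x
        have tC: "\<bar>t\<bar> * C \<le> m" using t C(1) by (simp add: pos_less_divide_eq less_imp_le)
        have "\<bar>t * (x \<bullet> (D *v x))\<bar> \<le> \<bar>t\<bar> * (C * (x \<bullet> x))"
          by (simp add: abs_mult mult_left_mono qb)
        also have "\<dots> \<le> m * (x \<bullet> x)" using tC by (simp add: mult.assoc[symmetric] mult_right_mono)
        finally have "- (m * (x \<bullet> x)) \<le> t * (x \<bullet> (D *v x))" by linarith
        moreover have "x \<bullet> ((Q + t *\<^sub>R D) *v x) = x \<bullet> (Q *v x) + t * (x \<bullet> (D *v x))"
          by (simp add: matrix_vector_mult_add_rdistrib scaleR_matrix_vector_assoc[symmetric] inner_add_right)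
        ultimately show "0 \<le> x \<bullet> ((Q + t *\<^sub>R D) *v x)" using unif[of x] by linarith
      qed
      thus ?thesis using Kadd[OF QK Ksc[OF DK]] Hdef by auto
    qed
    have d: "m / C > 0" using mpos C(1) by simp
    have "(M - Q) \<bullet> D \<le> 0" by (rule var[OF d]) (use inH in auto)
    moreover have "(M - Q) \<bullet> (-D) \<le> 0"
    proof (rule var[OF d])
      fix t :: real assume "0 < t" "t < m / C"
      hence "Q + (-t) *\<^sub>R D \<in> \<H>" using inH[of "-t"] by simp
      thus "Q + t *\<^sub>R (-D) \<in> \<H>" by simp
    qed
    ultimately show ?thesis by simp
  qed
  have trMD: "trace (M ** D) = trace (Q ** D)" if "D \<in> K" "transpose D = D" for D
    using orth[OF that]
    by (simp add: frob_inner_eq[symmetric] frob_inner_def transpose_diff Msym Qsym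
          matrix_diff_rdistrib trace_sub)
  have sq: "sqrt (\<mu> b) * sqrt (\<mu> b) = \<mu> b" for b using mu0[of b] by simp
  have mune: "\<mu> b \<noteq> 0" if "b \<in> B" for b using mupos[OF that] by simp
  have sqp: "sqrt (\<mu> b) > 0" if "b \<in> B" for b using mupos[OF that] by simp
  obtain P where PK: "P \<in> K" and Pev: "\<forall>b\<in>B. P *v b = sqrt (\<mu> b) *\<^sub>R b"
    using fcalc_onb[OF K QK B ev, of sqrt] by blast
  obtain Pi where PiK: "Pi \<in> K" and Piev: "\<forall>b\<in>B. Pi *v b = (1 / sqrt (\<mu> b)) *\<^sub>R b"
    using fcalc_onb[OF K QK B ev, of "\<lambda>l. 1 / sqrt l"] by blast
  have Ppd: "pd P" using onb_pd[OF B, of P "\<lambda>b. sqrt (\<mu> b)"] Pev sqp by blast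
  have Pisym: "transpose Pi = Pi" using onb_sym[OF B, of Pi "\<lambda>b. 1 / sqrt (\<mu> b)"] Piev by blast
  have PP: "P ** P = Q"
    by (rule onb_eq[OF B]) (simp add: Pev ev matrix_vector_mul_assoc[symmetric] matrix_vector_mult_scaleR abs_of_nonneg[OF mu0])
  have PPi: "P ** Pi = mat 1"
    by (rule onb_eq[OF B]) (use sqp mune in \<open>simp add: Pev Piev matrix_vector_mul_assoc[symmetric] matrix_vector_mult_scaleR\<close>)
  have PiP: "Pi ** P = mat 1"
    by (rule onb_eq[OF B]) (use sqp mune in \<open>simp add: Pev Piev matrix_vector_mul_assoc[symmetric] matrix_vector_mult_scaleR\<close>)
  have QPi: "Q ** Pi = P"
    by (rule onb_eq[OF B]) (use sqp mu0 mune in \<open>simp add: Pev Piev ev matrix_vector_mul_assoc[symmetric] matrix_vector_mult_scaleR real_div_sqrt\<close>)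
  have PiQPi: "Pi ** Q ** Pi = mat 1"
    by (rule onb_eq[OF B]) (use sqp mu0 sq mune in \<open>simp add: Pev Piev ev matrix_vector_mul_assoc[symmetric] matrix_vector_mult_scaleR real_div_sqrt\<close>)
  have invP: "matrix_inv P = Pi"
  proof -
    have "P ** matrix_inv P = mat 1 \<and> matrix_inv P ** P = mat 1"
      unfolding matrix_inv_def by (rule someI[of _ Pi]) (simp add: PPi PiP)
    hence "matrix_inv P ** P = mat 1" by blast
    hence "matrix_inv P = matrix_inv P ** (P ** Pi)" using PPi by simp
    also have "\<dots> = Pi" using \<open>matrix_inv P ** P = mat 1\<close> by (simp add: matrix_mul_assoc)
    finally show ?thesis .
  qed
  have trMPi: "trace (M ** Pi) = trace P" using trMD[OF PiK Pisym] QPi by simp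
  have fP: "frob_inner M (matrix_inv P) + trace P = 2 * trace P"
    using trMPi by (simp add: invP frob_inner_def Msym)
  have main: "2 * trace P \<le> frob_inner M (matrix_inv A) + trace A \<and>
     (frob_inner M (matrix_inv A) + trace A \<le> 2 * trace P \<longrightarrow> A = P)"
    if AH: "A \<in> \<H>" and Apd: "pd A" for A
  proof -
    have AK: "A \<in> K" using AH Hdef by auto
    have Asym: "transpose A = A" using Apd by (simp add: pd_def)
    have "\<forall>x. A *v x = 0 \<longrightarrow> x = 0" using Apd unfolding pd_def by (metis inner_zero_right less_irrefl)
    then obtain Bl where "Bl ** A = mat 1" using matrix_left_invertible_ker by blast
    hence "A ** Bl = mat 1 \<and> Bl ** A = mat 1" using matrix_left_right_inverse by blast
    hence AinvI: "A ** matrix_inv A = mat 1 \<and> matrix_inv A ** A = mat 1"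
      unfolding matrix_inv_def by (rule someI)
    define Ai where "Ai = matrix_inv A"
    have AAi: "A ** Ai = mat 1" and AiA: "Ai ** A = mat 1" using AinvI by (auto simp: Ai_def)
    have AAiv: "A *v (Ai *v x) = x" for x by (simp add: matrix_vector_mul_assoc AAi)
    have AiAv: "Ai *v (A *v x) = x" for x by (simp add: matrix_vector_mul_assoc AiA)
    have Aisym: "transpose Ai = Ai"
    proof -
      have "transpose Ai = transpose Ai ** (A ** Ai)" using AAi by simp
      also have "\<dots> = transpose (A ** Ai) ** Ai"
        by (simp add: matrix_mul_assoc matrix_transpose_mul Asym)
      also have "\<dots> = Ai" using AAi by simp
      finally show ?thesis .
    qed
    have Aipos: "0 < y \<bullet> (Ai *v y)" if "y \<noteq> 0" for y
    proof -
      define z where "z = Ai *v y"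
      have Az: "A *v z = y" by (simp add: z_def AAiv)
      hence "z \<noteq> 0" using that by auto
      hence "0 < z \<bullet> (A *v z)" using Apd by (simp add: pd_def)
      thus ?thesis using Az by (simp add: z_def inner_commute)
    qed
    define X where "X = A ** Pi - mat 1"
    define N where "N = transpose X ** (Ai ** X)"
    have XT: "transpose X = Pi ** A - mat 1"
      by (simp add: X_def transpose_diff matrix_transpose_mul Pisym Asym)
    have Nq: "x \<bullet> (N *v x) = (X *v x) \<bullet> (Ai *v (X *v x))" for x
      using inner_transpose[of x X "Ai *v (X *v x)"]
      by (simp add: N_def matrix_vector_mul_assoc[symmetric] del: transpose_matrix_vector)
    have Npsd: "psd N" unfolding psd_def
    proof (intro conjI allI)
      show "transpose N = N"
        by (simp add: N_def matrix_transpose_mul Aisym matrix_mul_assoc)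
      fix x show "0 \<le> x \<bullet> (N *v x)"
        using Aipos[of "X *v x"] by (cases "X *v x = 0") (auto simp: Nq)
    qed
    define D1 where "D1 = Pi ** A ** Pi"
    have D1K: "D1 \<in> K" using Kmul PiK AK by (simp add: D1_def)
    have D1sym: "transpose D1 = D1"
      by (simp add: D1_def matrix_transpose_mul Pisym Asym matrix_mul_assoc)
    have Nform: "N = D1 - Pi - Pi + Ai"
      unfolding matrix_eq
    proof
      fix x
      have N': "N = (Pi ** A - mat 1) ** (Ai ** (A ** Pi - mat 1))"
        unfolding N_def XT by (simp add: X_def)
      have "N *v x = Pi *v (A *v (Pi *v x)) - Pi *v x - Pi *v x + Ai *v x"
        unfolding N' by (simp add: matrix_vector_mul_assoc[symmetric] matrix_vector_mult_diff_rdistrib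
           matrix_vector_mult_diff_distrib AAiv AiAv algebra_simps)
      also have "\<dots> = (D1 - Pi - Pi + Ai) *v x"
        by (simp only: D1_def matrix_vector_mult_diff_rdistrib matrix_vector_mult_add_rdistrib
           matrix_vector_mul_assoc matrix_mul_assoc)
      finally show "N *v x = (D1 - Pi - Pi + Ai) *v x" .
    qed
    have trN: "trace (M ** N) = trace (M ** D1) - trace (M ** Pi) - trace (M ** Pi) + trace (M ** Ai)"
      by (simp only: Nform matrix_add_ldistrib matrix_diff_ldistrib trace_add trace_sub)
    have "trace (M ** D1) = trace (Q ** D1)" using trMD[OF D1K D1sym] .
    also have "Q ** D1 = (Q ** Pi ** A) ** Pi" by (simp add: D1_def matrix_mul_assoc)
    also have "trace \<dots> = trace (Pi ** (Q ** Pi ** A))" by (rule trace_mul_sym)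
    also have "Pi ** (Q ** Pi ** A) = (Pi ** Q ** Pi) ** A" by (simp add: matrix_mul_assoc)
    also have "\<dots> = A" by (simp add: PiQPi)
    finally have trD1: "trace (M ** D1) = trace A" .
    have fA: "frob_inner M (matrix_inv A) + trace A = trace (M ** N) + 2 * trace P"
      using trN trD1 trMPi by (simp add: frob_inner_def Msym Ai_def[symmetric])
    have ge: "0 \<le> trace (M ** N)" by (rule trace_pos(1)[OF assms(2) Npsd])
    have eqcase: "A = P" if le: "frob_inner M (matrix_inv A) + trace A \<le> 2 * trace P"
    proof -
      have "\<not> 0 < trace (M ** N)" using le fA by simp
      hence N0: "N = 0" using trace_pos(2)[OF assms(2) Npsd] by blast
      have "X *v x = 0" for x
      proof (rule ccontr)
        assume "X *v x \<noteq> 0"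
        hence "0 < x \<bullet> (N *v x)" using Aipos Nq by simp
        thus False using N0 by simp
      qed
      hence "X = 0" by (simp add: matrix_eq)
      hence APi: "A ** Pi = mat 1" by (simp add: X_def)
      have "A = A ** (Pi ** P)" using PiP by simp
      also have "\<dots> = P" by (simp add: matrix_mul_assoc APi)
      finally show ?thesis .
    qed
    show ?thesis using fA ge eqcase by simp
  qed
  have Ppsd: "psd P" using Ppd by (rule pd_psd)
  have PH: "P \<in> \<H>" using Ppsd PK Hdef by blast
  have precP: "precond_P \<H> M = P"
    unfolding precond_P_def
  proof (rule the_equality)
    show "P \<in> \<H> \<and> pd P \<and> (\<forall>H'. H' \<in> \<H> \<and> pd H' \<longrightarrow>
         frob_inner M (matrix_inv P) + trace P \<le> frob_inner M (matrix_inv H') + trace H')"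
      using PH Ppd main fP by auto
  next
    fix Y assume "Y \<in> \<H> \<and> pd Y \<and> (\<forall>H'. H' \<in> \<H> \<and> pd H' \<longrightarrow>
         frob_inner M (matrix_inv Y) + trace Y \<le> frob_inner M (matrix_inv H') + trace H')"
    hence Y: "Y \<in> \<H>" "pd Y" "frob_inner M (matrix_inv Y) + trace Y \<le> 2 * trace P"
      using PH Ppd fP by auto
    thus "Y = P" using main by blast
  qed
  have projQ: "frob_proj \<H> M = Q"
    unfolding frob_proj_def
  proof (rule the_equality)
    show "Q \<in> \<H> \<and> (\<forall>H'. H' \<in> \<H> \<longrightarrow> frob_norm_sq (M - Q) \<le> frob_norm_sq (M - H'))"
      using Q Qmin by (auto simp: frob_norm_sq_eq dist_norm intro!: power_mono)
  next
    fix Y assume "Y \<in> \<H> \<and> (\<forall>H'. H' \<in> \<H> \<longrightarrow> frob_norm_sq (M - Y) \<le> frob_norm_sq (M - H'))"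
    hence Y: "Y \<in> \<H>" and le: "(norm (M - Y))^2 \<le> (norm (M - Q))^2"
      using Q by (auto simp: frob_norm_sq_eq)
    have YK: "Y \<in> K" and Ysym: "transpose Y = Y" using Y Hdef by (auto simp: psd_def)
    have o: "(M - Q) \<bullet> (Q - Y) = 0" using orth[OF Kdiff[OF QK YK]] by (simp add: transpose_diff Qsym Ysym)
    have e: "(M - Q) + (Q - Y) = M - Y" by simp
    have "(norm (M - Y))^2 = ((M - Q) + (Q - Y)) \<bullet> ((M - Q) + (Q - Y))"
      by (simp only: e power2_norm_eq_inner)
    also have "\<dots> = (norm (M - Q))^2 + 2 * ((M - Q) \<bullet> (Q - Y)) + (norm (Q - Y))^2"
      unfolding inner_add_left inner_add_right power2_norm_eq_inner
      by (simp only: inner_commute[of "Q - Y" "M - Q"] mult_2 distrib_right add.assoc)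
    finally have "(norm (M - Y))^2 = (norm (M - Q))^2 + 2 * ((M - Q) \<bullet> (Q - Y)) + (norm (Q - Y))^2" .
    hence "(norm (Q - Y))^2 \<le> 0" using le o by simp
    hence "Q - Y = 0" by simp
    thus "Y = Q" by simp
  qed
  show ?thesis using precP projQ PP by simp
qed

end
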